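(* Let $\tau$ be a traversal sequence, and let $\mathbf{w}=\langle w^1,\dots,w^n\rangle$ and $\tilde{\mathbf{w}}=\langle\tilde w^1,\dots,\tilde w^n\rangle$ be two sequences of tasks such that $\tilde w^i_s\le w^i_s$ for every $i\in\{1,\dots,n\}$ and every state $s$. Then the total work done by the fractional traversal algorithm with respect to $\tau$ and $\mathbf{w}$ is at least the total work done with respect to $\tau$ and $\tilde{\mathbf{w}}$.
   Context: A metrical task system has states $S=\{1,\dots,m\}$ and a symmetric non-negative matrix $(d_{st})$ with $d_{ss}=0$ satisfying the triangle inequality. A task is a vector $w\in\mathbb{R}_{\ge0}^m$. A traversal sequence is an infinite sequence $\tau=\tau_1,\tau_2,\dots$ of states. Write $\delta_{\ell,\ell'}=\sum_{j=\min(\ell,\ell')}^{\max(\ell,\ell')-1}d_{\tau_j\tau_{j+1}}$. Fractional traversal algorithm on $\tau$: it keeps a position $j$ (initially $t_0=1$) and the work $\rho$ done at the current position since arriving there (initially $0$). On a task $w$, with remaining fraction $f=1$, it repeats while $f>0$: $\lambda\gets\min\{(d_{\tau_j\tau_{j+1}}-\rho)/w_{\tau_j},\,f\}$ (interpreted as $f$ if $w_{\tau_j}=0$), $\rho\gets\rho+\lambda w_{\tau_j}$ (work $\lambda w_{\tau_j}$ is done in state $\tau_j$), $f\gets f-\lambda$, and if $\rho=d_{\tau_j\tau_{j+1}}$ then $j\gets j+1$, $\rho\gets0$. If $t_n$ is the position after processing $n$ tasks and $\rho_{t_n}$ the current value of $\rho$, the total work done is $\delta_{t_0,t_n}+\rho_{t_n}$.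 *)

theory Defs
  imports Complex_Main
begin

definition is_mts :: "nat \<Rightarrow> (nat \<Rightarrow> nat \<Rightarrow> real) \<Rightarrow> bool" where
  "is_mts m d \<longleftrightarrow>
     (\<forall>s\<in>{1..m}. \<forall>t\<in>{1..m}. d s t \<ge> 0 \<and> d s t = d t s) \<and>
     (\<forall>s\<in>{1..m}. d s s = 0) \<and>
     (\<forall>s\<in>{1..m}. \<forall>t\<in>{1..m}. \<forall>u\<in>{1..m}. d s u \<le> d s t + d t u)"

definition delta :: "(nat \<Rightarrow> nat \<Rightarrow> real) \<Rightarrow> (nat \<Rightarrow> nat) \<Rightarrow> nat \<Rightarrow> nat \<Rightarrow> real" where
  "delta d \<tau> l l' = (\<Sum>j\<in>{min l l'..<max l l'}. d (\<tau> j) (\<tau> (Suc j)))"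

text \<open>One iteration of the inner loop, on configuration (j, rho, f);
  w is the current task (a function on states).\<close>
definition ft_step :: "(nat \<Rightarrow> nat \<Rightarrow> real) \<Rightarrow> (nat \<Rightarrow> nat) \<Rightarrow> (nat \<Rightarrow> real)
    \<Rightarrow> nat \<times> real \<times> real \<Rightarrow> nat \<times> real \<times> real" where
  "ft_step d \<tau> w c = (case c of (j, \<rho>, f) \<Rightarrow>
     (let D = d (\<tau> j) (\<tau> (Suc j));
          lam = (if w (\<tau> j) = 0 then f else min ((D - \<rho>) / w (\<tau> j)) f);
          \<rho>1 = \<rho> + lam * w (\<tau> j);
          f1 = f - lam
      in if \<rho>1 = D then (Suc j, 0, f1) else (j, \<rho>1, f1)))"

text \<open>ft_loop d tau w (j,rho,f) (j',rho'): the loop "while f > 0" started in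
  configuration (j,rho,f) terminates with position j' and work rho'.\<close>
inductive ft_loop :: "(nat \<Rightarrow> nat \<Rightarrow> real) \<Rightarrow> (nat \<Rightarrow> nat) \<Rightarrow> (nat \<Rightarrow> real)
    \<Rightarrow> nat \<times> real \<times> real \<Rightarrow> nat \<times> real \<Rightarrow> bool"
  for d \<tau> w where
  stop: "\<not> f > 0 \<Longrightarrow> ft_loop d \<tau> w (j, \<rho>, f) (j, \<rho>)"
| iter: "f > 0 \<Longrightarrow> ft_loop d \<tau> w (ft_step d \<tau> w (j, \<rho>, f)) r \<Longrightarrow> ft_loop d \<tau> w (j, \<rho>, f) r"

text \<open>ft_after d tau ws i (t, rho): after processing tasks ws 1, ..., ws i
  (task i is the function ws i on states), starting from t_0 = 1 and rho = 0,
  the algorithm is at position t with current work rho.\<close>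
inductive ft_after :: "(nat \<Rightarrow> nat \<Rightarrow> real) \<Rightarrow> (nat \<Rightarrow> nat) \<Rightarrow> (nat \<Rightarrow> nat \<Rightarrow> real)
    \<Rightarrow> nat \<Rightarrow> nat \<times> real \<Rightarrow> bool"
  for d \<tau> ws where
  init: "ft_after d \<tau> ws 0 (1, 0)"
| task: "ft_after d \<tau> ws i (j, \<rho>) \<Longrightarrow> ft_loop d \<tau> (ws (Suc i)) (j, \<rho>, 1) r
          \<Longrightarrow> ft_after d \<tau> ws (Suc i) r"

definition ft_total_work :: "(nat \<Rightarrow> nat \<Rightarrow> real) \<Rightarrow> (nat \<Rightarrow> nat) \<Rightarrow> (nat \<Rightarrow> nat \<Rightarrow> real)
    \<Rightarrow> nat \<Rightarrow> real \<Rightarrow> bool" where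
  "ft_total_work d \<tau> ws n W \<longleftrightarrow>
     (\<exists>t \<rho>. ft_after d \<tau> ws n (t, \<rho>) \<and> W = delta d \<tau> 1 t + \<rho>)"

end

theory Submission imports Defs begin

definition lexle :: "nat \<times> real \<Rightarrow> nat \<times> real \<Rightarrow> bool" where
  "lexle a b \<longleftrightarrow> fst a < fst b \<or> (fst a = fst b \<and> snd a \<le> snd b)"

lemma step_single:
  assumes "0 \<le> \<rho>" "\<rho> \<le> d (\<tau> j) (\<tau> (Suc j))" "0 \<le> f" "0 \<le> w (\<tau> j)"
    and "ft_step d \<tau> w (j, \<rho>, f) = (j1, \<rho>1, f1)"
  shows "(j1 = Suc j \<and> \<rho>1 = 0 \<or> j1 = j \<and> \<rho> \<le> \<rho>1 \<and> \<rho>1 < d (\<tau> j) (\<tau> (Suc j)) \<and> f1 = 0)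
     \<and> 0 \<le> f1 \<and> f1 \<le> f"
proof -
  let ?D = "d (\<tau> j) (\<tau> (Suc j))" and ?v = "w (\<tau> j)"
  define lam where "lam = (if ?v = 0 then f else min ((?D - \<rho>) / ?v) f)"
  have l0: "0 \<le> lam" "lam \<le> f" using assms by (auto simp: lam_def)
  have l1: "\<rho> + lam * ?v \<le> ?D"
    using assms by (auto simp: lam_def min_def field_simps split: if_splits)
  have l2: "\<rho> + lam * ?v \<noteq> ?D \<Longrightarrow> lam = f"
    using assms by (auto simp: lam_def min_def field_simps split: if_splits)
  have e: "ft_step d \<tau> w (j, \<rho>, f) = (if \<rho> + lam * ?v = ?D then (Suc j, 0, f - lam) else (j, \<rho> + lam * ?v, f - lam))"
    unfolding ft_step_def lam_def Let_def by simp
  show ?thesis using assms(5) l0 l1 l2 assms(1-4) unfolding e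
    by (auto split: if_splits simp: mult_nonneg_nonneg)
qed

lemma step_pair:
  assumes "0 \<le> \<sigma>" "\<sigma> \<le> \<rho>" "\<rho> \<le> d (\<tau> j) (\<tau> (Suc j))" "0 < g" "g \<le> f"
    "0 \<le> wt (\<tau> j)" "wt (\<tau> j) \<le> w (\<tau> j)"
    and "ft_step d \<tau> w (j, \<rho>, f) = (j1, \<rho>1, f1)"
    and "ft_step d \<tau> wt (j, \<sigma>, g) = (k1, \<sigma>1, g1)"
  shows "lexle (k1, \<sigma>1) (j1, \<rho>1) \<and> g1 \<le> f1"
proof -
  let ?D = "d (\<tau> j) (\<tau> (Suc j))" and ?v = "w (\<tau> j)" and ?u = "wt (\<tau> j)"
  define lam where "lam = (if ?v = 0 then f else min ((?D - \<rho>) / ?v) f)"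
  define mu where "mu = (if ?u = 0 then g else min ((?D - \<sigma>) / ?u) g)"
  have ev: "ft_step d \<tau> w (j, \<rho>, f) = (if \<rho> + lam * ?v = ?D then (Suc j, 0, f - lam) else (j, \<rho> + lam * ?v, f - lam))"
    unfolding ft_step_def lam_def Let_def by simp
  have eu: "ft_step d \<tau> wt (j, \<sigma>, g) = (if \<sigma> + mu * ?u = ?D then (Suc j, 0, g - mu) else (j, \<sigma> + mu * ?u, g - mu))"
    unfolding ft_step_def mu_def Let_def by simp
  have vpos: "0 \<le> ?v" using assms by linarith
  have l0: "0 \<le> lam" "lam \<le> f" using assms vpos by (auto simp: lam_def)
  have l1: "\<rho> + lam * ?v \<le> ?D"
    using assms vpos by (auto simp: lam_def min_def field_simps split: if_splits)
  have l2: "\<rho> + lam * ?v \<noteq> ?D \<Longrightarrow> lam = f"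
    using assms vpos by (auto simp: lam_def min_def field_simps split: if_splits)
  have m0: "0 \<le> mu" "mu \<le> g" using assms by (auto simp: mu_def)
  have m2: "\<sigma> + mu * ?u \<noteq> ?D \<Longrightarrow> mu = g"
    using assms by (auto simp: mu_def min_def field_simps split: if_splits)
  have m3: "mu < g \<Longrightarrow> ?u > 0 \<and> mu = (?D - \<sigma>) / ?u"
    using assms by (auto simp: mu_def min_def split: if_splits)
  have l3: "?v > 0 \<Longrightarrow> lam \<le> (?D - \<rho>) / ?v" by (auto simp: lam_def)
  have key1: "mu * ?u \<le> lam * ?v" if "\<rho> + lam * ?v \<noteq> ?D"
  proof -
    have "lam = f" using l2 that .
    thus ?thesis using m0 assms by (simp add: mult_mono)
  qed
  have key2: "g - mu \<le> f - lam" if "mu < g"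
  proof -
    from m3[OF that] have u: "?u > 0" "mu = (?D - \<sigma>) / ?u" by auto
    have v: "?v > 0" using u assms by linarith
    have "(?D - \<rho>) / ?v \<le> (?D - \<sigma>) / ?u"
      using u v assms by (intro frac_le) auto
    thus ?thesis using l3[OF v] u assms by linarith
  qed
  have key3: "g - mu \<le> f - lam"
  proof (cases "mu < g")
    case True thus ?thesis by (rule key2)
  next
    case False thus ?thesis using m0 l0 by linarith
  qed
  show ?thesis using assms(8,9) unfolding ev eu lexle_def
    using l0 l1 m0 key1 key3 m2 l2 assms
    by (auto split: if_splits)
qed

lemma lexle_trans: "lexle a b \<Longrightarrow> lexle b c \<Longrightarrow> lexle a c"
  unfolding lexle_def by auto

lemma loop_mono:
  assumes "ft_loop d \<tau> w c r" "c = (j, \<rho>, f)" "1 \<le> j" "0 \<le> \<rho>"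
    "\<rho> \<le> d (\<tau> j) (\<tau> (Suc j))" "0 \<le> f"
    and H1: "\<forall>j\<ge>1. 0 \<le> d (\<tau> j) (\<tau> (Suc j))"
    and Hw: "\<forall>j\<ge>1. 0 \<le> w (\<tau> j)"
  shows "1 \<le> fst r \<and> 0 \<le> snd r \<and> snd r \<le> d (\<tau> (fst r)) (\<tau> (Suc (fst r))) \<and> lexle (j, \<rho>) r"
  using assms(1-6)
proof (induction arbitrary: j \<rho> f rule: ft_loop.induct)
  case (stop f j \<rho>)
  thus ?case by (auto simp: lexle_def)
next
  case (iter f j' \<rho>' r)
  obtain j1 \<rho>1 f1 where e: "ft_step d \<tau> w (j, \<rho>, f) = (j1, \<rho>1, f1)"
    by (metis prod_cases3)
  have s: "(j1 = Suc j \<and> \<rho>1 = 0 \<or> j1 = j \<and> \<rho> \<le> \<rho>1 \<and> \<rho>1 < d (\<tau> j) (\<tau> (Suc j)) \<and> f1 = 0)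
     \<and> 0 \<le> f1 \<and> f1 \<le> f"
    using step_single[OF _ _ _ _ e] iter.prems Hw by auto
  have v: "1 \<le> j1" "0 \<le> \<rho>1" "\<rho>1 \<le> d (\<tau> j1) (\<tau> (Suc j1))" "0 \<le> f1"
    using s H1 iter.prems by auto
  have IH: "1 \<le> fst r \<and> 0 \<le> snd r \<and> snd r \<le> d (\<tau> (fst r)) (\<tau> (Suc (fst r))) \<and> lexle (j1, \<rho>1) r"
    using iter.IH[OF _ v] e iter.prems by auto
  have "lexle (j, \<rho>) (j1, \<rho>1)" using s by (auto simp: lexle_def)
  thus ?case using IH lexle_trans by blast
qed

lemma loop_cmp:
  assumes "ft_loop d \<tau> wt c r" "c = (k, \<sigma>, g)"
    "ft_loop d \<tau> w (j, \<rho>, f) rA"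
    "1 \<le> j" "0 \<le> \<rho>" "\<rho> \<le> d (\<tau> j) (\<tau> (Suc j))" "0 \<le> f"
    "1 \<le> k" "0 \<le> \<sigma>" "\<sigma> \<le> d (\<tau> k) (\<tau> (Suc k))" "0 \<le> g"
    "lexle (k, \<sigma>) (j, \<rho>)" "g \<le> f"
    and H1: "\<forall>j\<ge>1. 0 \<le> d (\<tau> j) (\<tau> (Suc j))"
    and Hw: "\<forall>j\<ge>1. 0 \<le> wt (\<tau> j) \<and> wt (\<tau> j) \<le> w (\<tau> j)"
  shows "lexle r rA"
  using assms(1-13)
proof (induction arbitrary: k \<sigma> g j \<rho> f rA rule: ft_loop.induct)
  case (stop g' k' \<sigma>')
  have "lexle (j, \<rho>) rA"
    using loop_mono[OF stop.prems(2) refl] stop.prems H1 Hw by force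
  thus ?case using stop lexle_trans by auto
next
  case (iter g' k' \<sigma>' r)
  have kk: "k' = k" "\<sigma>' = \<sigma>" "g' = g" using iter.prems by auto
  obtain k1 \<sigma>1 g1 where eB: "ft_step d \<tau> wt (k, \<sigma>, g) = (k1, \<sigma>1, g1)"
    by (metis prod_cases3)
  have sB: "(k1 = Suc k \<and> \<sigma>1 = 0 \<or> k1 = k \<and> \<sigma> \<le> \<sigma>1 \<and> \<sigma>1 < d (\<tau> k) (\<tau> (Suc k)) \<and> g1 = 0)
     \<and> 0 \<le> g1 \<and> g1 \<le> g"
    using step_single[OF _ _ _ _ eB] iter.prems Hw by auto
  have vB: "1 \<le> k1" "0 \<le> \<sigma>1" "\<sigma>1 \<le> d (\<tau> k1) (\<tau> (Suc k1))" "0 \<le> g1"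
    using sB H1 iter.prems by auto
  have rB: "ft_loop d \<tau> wt (k1, \<sigma>1, g1) r" using iter.hyps(2) eB kk by simp
  show ?case
  proof (cases "k < j")
    case True
    have "lexle (k1, \<sigma>1) (j, \<rho>)" using sB True iter.prems by (auto simp: lexle_def)
    moreover have "g1 \<le> f" using sB iter.prems by linarith
    ultimately show ?thesis
      using iter.IH[OF _ iter.prems(2) iter.prems(3-6) vB] eB kk iter.prems by auto
  next
    case False
    hence kj: "k = j" "\<sigma> \<le> \<rho>" using iter.prems(11) by (auto simp: lexle_def)
    have fpos: "f > 0" using iter.hyps(1) kk iter.prems by linarith
    obtain j1 \<rho>1 f1 where eA: "ft_step d \<tau> w (j, \<rho>, f) = (j1, \<rho>1, f1)"
      by (metis prod_cases3)
    have rA: "ft_loop d \<tau> w (j1, \<rho>1, f1) rA"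
      using iter.prems(2) fpos eA by (cases rule: ft_loop.cases) auto
    have wj: "0 \<le> w (\<tau> j)" using Hw iter.prems by force
    have sA: "(j1 = Suc j \<and> \<rho>1 = 0 \<or> j1 = j \<and> \<rho> \<le> \<rho>1 \<and> \<rho>1 < d (\<tau> j) (\<tau> (Suc j)) \<and> f1 = 0)
       \<and> 0 \<le> f1 \<and> f1 \<le> f"
      using step_single[OF _ _ _ _ eA] iter.prems wj by auto
    have vA: "1 \<le> j1" "0 \<le> \<rho>1" "\<rho>1 \<le> d (\<tau> j1) (\<tau> (Suc j1))" "0 \<le> f1"
      using sA H1 iter.prems by auto
    have p: "lexle (k1, \<sigma>1) (j1, \<rho>1) \<and> g1 \<le> f1"
      using step_pair[of \<sigma> \<rho> d \<tau> j g f wt w j1 \<rho>1 f1 k1 \<sigma>1 g1] eA eB kj iter.prems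
        iter.hyps(1) kk Hw by auto
    show ?thesis
      using iter.IH[OF _ rA vA vB] eB kk p by auto
  qed
qed


definition valid :: "(nat \<Rightarrow> nat \<Rightarrow> real) \<Rightarrow> (nat \<Rightarrow> nat) \<Rightarrow> nat \<times> real \<Rightarrow> bool" where
  "valid d \<tau> p \<longleftrightarrow> 1 \<le> fst p \<and> 0 \<le> snd p \<and> snd p \<le> d (\<tau> (fst p)) (\<tau> (Suc (fst p)))"

lemma after_cmp:
  assumes H1: "\<forall>j\<ge>1. 0 \<le> d (\<tau> j) (\<tau> (Suc j))"
    and Hw: "\<forall>i\<in>{1..n}. \<forall>j\<ge>1. 0 \<le> wt i (\<tau> j) \<and> wt i (\<tau> j) \<le> w i (\<tau> j)"
  shows "i \<le> n \<Longrightarrow> ft_after d \<tau> w i a \<Longrightarrow> ft_after d \<tau> wt i b \<Longrightarrow>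
     lexle b a \<and> valid d \<tau> a \<and> valid d \<tau> b"
proof (induction i arbitrary: a b)
  case 0
  have "a = (1, 0)" using 0(2) by (cases rule: ft_after.cases) auto
  moreover have "b = (1, 0)" using 0(3) by (cases rule: ft_after.cases) auto
  ultimately show ?case using H1 by (auto simp: lexle_def valid_def)
next
  case (Suc i)
  obtain j \<rho> where A: "ft_after d \<tau> w i (j, \<rho>)" "ft_loop d \<tau> (w (Suc i)) (j, \<rho>, 1) a"
    using Suc.prems(2) by (cases rule: ft_after.cases) auto
  obtain k \<sigma> where B: "ft_after d \<tau> wt i (k, \<sigma>)" "ft_loop d \<tau> (wt (Suc i)) (k, \<sigma>, 1) b"
    using Suc.prems(3) by (cases rule: ft_after.cases) auto
  have IH: "lexle (k, \<sigma>) (j, \<rho>) \<and> valid d \<tau> (j, \<rho>) \<and> valid d \<tau> (k, \<sigma>)"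
    using Suc.IH[OF _ A(1) B(1)] Suc.prems by auto
  have hw: "\<forall>j\<ge>1. 0 \<le> wt (Suc i) (\<tau> j) \<and> wt (Suc i) (\<tau> j) \<le> w (Suc i) (\<tau> j)"
    using Hw Suc.prems(1) by auto
  have hw1: "\<forall>j\<ge>1. 0 \<le> w (Suc i) (\<tau> j)" using hw by force
  have hw2: "\<forall>j\<ge>1. 0 \<le> wt (Suc i) (\<tau> j)" using hw by force
  have "lexle b a"
    using loop_cmp[OF B(2) refl A(2) _ _ _ _ _ _ _ _ _ _ H1 hw] IH by (auto simp: valid_def)
  moreover have "valid d \<tau> a"
    using loop_mono[OF A(2) refl _ _ _ _ H1 hw1] IH by (auto simp: valid_def)
  moreover have "valid d \<tau> b"
    using loop_mono[OF B(2) refl _ _ _ _ H1 hw2] IH by (auto simp: valid_def)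
  ultimately show ?case by blast
qed

lemma work_cmp:
  assumes H1: "\<forall>j\<ge>1. 0 \<le> d (\<tau> j) (\<tau> (Suc j))"
    and "lexle (k, \<sigma>) (j, \<rho>)" "valid d \<tau> (j, \<rho>)" "valid d \<tau> (k, \<sigma>)"
  shows "delta d \<tau> 1 k + \<sigma> \<le> delta d \<tau> 1 j + \<rho>"
proof (cases "k < j")
  case True
  let ?f = "\<lambda>j. d (\<tau> j) (\<tau> (Suc j))"
  have k1: "1 \<le> k" using assms by (auto simp: valid_def)
  have dk: "delta d \<tau> 1 k = sum ?f {1..<k}" using k1 by (simp add: delta_def)
  have dj: "delta d \<tau> 1 j = sum ?f {1..<j}" using k1 True by (simp add: delta_def)
  have "sum ?f {1..<j} = sum ?f {1..<k} + sum ?f {k..<j}"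
    using k1 True by (simp add: sum.atLeastLessThan_concat)
  also have "sum ?f {k..<j} = ?f k + sum ?f {Suc k..<j}"
    using True by (simp add: sum.atLeast_Suc_lessThan)
  finally have e: "sum ?f {1..<j} = sum ?f {1..<k} + ?f k + sum ?f {Suc k..<j}" by simp
  have "0 \<le> sum ?f {Suc k..<j}" using H1 k1 by (intro sum_nonneg) auto
  thus ?thesis using e dk dj assms by (auto simp: valid_def)
next
  case False
  thus ?thesis using assms by (auto simp: lexle_def)
qed

theorem lemma1:
  fixes m n :: nat and d :: "nat \<Rightarrow> nat \<Rightarrow> real" and \<tau> :: "nat \<Rightarrow> nat"
    and w wt :: "nat \<Rightarrow> nat \<Rightarrow> real" and W Wt :: real
  assumes "is_mts m d"
    and "\<forall>j\<ge>1. \<tau> j \<in> {1..m}"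
    and "\<forall>i\<in>{1..n}. \<forall>s\<in>{1..m}. 0 \<le> wt i s \<and> wt i s \<le> w i s"
    and "ft_total_work d \<tau> w n W"
    and "ft_total_work d \<tau> wt n Wt"
  shows "Wt \<le> W"
proof -
  have H1: "\<forall>j\<ge>1. 0 \<le> d (\<tau> j) (\<tau> (Suc j))"
    using assms(1,2) unfolding is_mts_def by auto
  have Hw: "\<forall>i\<in>{1..n}. \<forall>j\<ge>1. 0 \<le> wt i (\<tau> j) \<and> wt i (\<tau> j) \<le> w i (\<tau> j)"
    using assms(2,3) by blast
  obtain j \<rho> where A: "ft_after d \<tau> w n (j, \<rho>)" "W = delta d \<tau> 1 j + \<rho>"
    using assms(4) unfolding ft_total_work_def by auto
  obtain k \<sigma> where B: "ft_after d \<tau> wt n (k, \<sigma>)" "Wt = delta d \<tau> 1 k + \<sigma>"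
    using assms(5) unfolding ft_total_work_def by auto
  have "lexle (k, \<sigma>) (j, \<rho>) \<and> valid d \<tau> (j, \<rho>) \<and> valid d \<tau> (k, \<sigma>)"
    using after_cmp[OF H1 Hw le_refl A(1) B(1)] .
  thus ?thesis using work_cmp[of d \<tau> k \<sigma> j \<rho>] H1 A(2) B(2) by blast
qed

end
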